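(* Let $V\subseteq\mathcal V$ be finite and $\mathbb E,\mathbb F\in\mathit{NProg}(V)$. (1) $\mathbb E\le_T^e\mathbb F$ implies $\mathbb E\le_T^p\mathbb F$, but the converse fails in general. (2) $\mathbb E\le_P^e\mathbb F$ implies $\mathbb E\le_P^p\mathbb F$, but the converse fails in general.
   Context: $\mathcal V$ is a countably infinite set of qubit variables; $\mathcal H_V=\bigotimes_{q\in V}\mathcal H_q$. $\mathcal D(\mathcal H)$: partial density operators; $\mathcal P(\mathcal H)$: effects; $\mathcal S(\mathcal H)$: projectors. $\mathit{DProg}(V)$: completely positive trace-nonincreasing super-operators on $\mathcal L(\mathcal H_V)$; $\mathit{NProg}(V)$: nonempty convex closed subsets of $\mathit{DProg}(V)$. Operators/super-operators on subsystems are implicitly extended by tensoring with identities. For finite $W$ and $M,N\in\mathcal P(\mathcal H_W)$: $\mathbb E\models_{tot}(\{M\},\{N\})$ iff for all finite $X\supseteq V\cup W$ and $\rho\in\mathcal D(\mathcal H_X)$, ${\rm tr}(M\rho)\le\inf_{\mathcal E\in\mathbb E}{\rm tr}(N\mathcal E(\rho))$; $\mathbb E\models_{par}(\{M\},\{N\})$ iff for all such $X,\rho$, ${\rm tr}(M\rho)\le\inf_{\mathcal E\in\mathbb E}[{\rm tr}(N\mathcal E(\rho))+{\rm tr}(\rho)-{\rm tr}(\mathcal E(\rho))]$. $\mathbb E\le_T^e\mathbb F$ iff for every finite $W$ and all $M,N\in\mathcal P(\mathcal H_W)$, $\mathbb E\models_{tot}(\{M\},\{N\})\Rightarrow\mathbb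 F\models_{tot}(\{M\},\{N\})$; $\le_T^p$ is the same with $M,N$ restricted to projectors $\mathcal S(\mathcal H_W)$; $\le_P^e,\le_P^p$ likewise with $\models_{par}$. *)

theory Defs
  imports Complex_Main
begin

text \<open>A computational basis state of the
  register X (a finite set of variables) is an assignment nat => bool that is
  False outside X. An operator on H_X is a complex function of two basis states,
  required to vanish outside basis X x basis X.\<close>

type_synonym qvar = nat
type_synonym bstate = "qvar \<Rightarrow> bool"
type_synonym qop = "bstate \<Rightarrow> bstate \<Rightarrow> complex"
type_synonym sop = "qop \<Rightarrow> qop"

definition basis :: "qvar set \<Rightarrow> bstate set" where
  "basis X = {f. \<forall>i. i \<notin> X \<longrightarrow> \<not> f i}"

definition res :: "qvar set \<Rightarrow> bstate \<Rightarrow> bstate" where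
  "res X f = (\<lambda>i. if i \<in> X then f i else False)"

definition merge :: "qvar set \<Rightarrow> bstate \<Rightarrow> bstate \<Rightarrow> bstate" where
  "merge V u a = (\<lambda>i. if i \<in> V then u i else a i)"

definition op_on :: "qvar set \<Rightarrow> qop \<Rightarrow> bool" where
  "op_on X A \<longleftrightarrow> (\<forall>f g. A f g \<noteq> 0 \<longrightarrow> f \<in> basis X \<and> g \<in> basis X)"

definition restrict_op :: "qvar set \<Rightarrow> qop \<Rightarrow> qop" where
  "restrict_op X A = (\<lambda>f g. if f \<in> basis X \<and> g \<in> basis X then A f g else 0)"

definition idop :: "qvar set \<Rightarrow> qop" where
  "idop X = (\<lambda>f g. if f \<in> basis X \<and> f = g then 1 else 0)"

definition mult :: "qvar set \<Rightarrow> qop \<Rightarrow> qop \<Rightarrow> qop" where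
  "mult X A B = (\<lambda>f g. \<Sum>h\<in>basis X. A f h * B h g)"

definition adj :: "qop \<Rightarrow> qop" where
  "adj A = (\<lambda>f g. cnj (A g f))"

definition trace :: "qvar set \<Rightarrow> qop \<Rightarrow> complex" where
  "trace X A = (\<Sum>f\<in>basis X. A f f)"

definition pos :: "qvar set \<Rightarrow> qop \<Rightarrow> bool" where
  "pos X A \<longleftrightarrow> op_on X A \<and>
     (\<forall>v :: bstate \<Rightarrow> complex.
        let q = (\<Sum>f\<in>basis X. \<Sum>g\<in>basis X. cnj (v f) * A f g * v g)
        in Im q = 0 \<and> Re q \<ge> 0)"

definition density :: "qvar set \<Rightarrow> qop \<Rightarrow> bool" where
  "density X \<rho> \<longleftrightarrow> pos X \<rho> \<and> Re (trace X \<rho>) \<le> 1"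

definition effect :: "qvar set \<Rightarrow> qop \<Rightarrow> bool" where
  "effect X M \<longleftrightarrow> pos X M \<and> pos X (\<lambda>f g. idop X f g - M f g)"

definition projector :: "qvar set \<Rightarrow> qop \<Rightarrow> bool" where
  "projector X M \<longleftrightarrow> op_on X M \<and> adj M = M \<and> mult X M M = M"

text \<open>Extension M (x) I of an operator M on H_W to H_X (W \<subseteq> X).\<close>
definition extop :: "qvar set \<Rightarrow> qvar set \<Rightarrow> qop \<Rightarrow> qop" where
  "extop X W M = (\<lambda>f g. if f \<in> basis X \<and> g \<in> basis X \<and> (\<forall>i. i \<notin> W \<longrightarrow> f i = g i)
                        then M (res W f) (res W g) else 0)"

text \<open>Extension E (x) id of a super-operator E on L(H_V) to L(H_X) (V \<subseteq> X).\<close>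
definition block :: "qvar set \<Rightarrow> qop \<Rightarrow> bstate \<Rightarrow> bstate \<Rightarrow> qop" where
  "block V \<rho> a b = (\<lambda>u v. if u \<in> basis V \<and> v \<in> basis V
                          then \<rho> (merge V u a) (merge V v b) else 0)"

definition extsup :: "qvar set \<Rightarrow> qvar set \<Rightarrow> sop \<Rightarrow> qop \<Rightarrow> qop" where
  "extsup X V E \<rho> = (\<lambda>f g. if f \<in> basis X \<and> g \<in> basis X
       then E (block V \<rho> (res (- V) f) (res (- V) g)) (res V f) (res V g) else 0)"

text \<open>DProg(V): completely positive, trace-nonincreasing (linear) super-operators on
  L(H_V). Each super-operator is represented canonically: it only depends on the
  restriction of its argument to H_V and its values are operators on H_V.\<close>
definition DProg :: "qvar set \<Rightarrow> sop set" where
  "DProg V = {E.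
     (\<forall>A. E A = E (restrict_op V A)) \<and>
     (\<forall>A. op_on V (E A)) \<and>
     (\<forall>A B. E (\<lambda>f g. A f g + B f g) = (\<lambda>f g. E A f g + E B f g)) \<and>
     (\<forall>c A. E (\<lambda>f g. c * A f g) = (\<lambda>f g. c * E A f g)) \<and>
     (\<forall>X \<rho>. finite X \<longrightarrow> V \<subseteq> X \<longrightarrow> pos X \<rho> \<longrightarrow> pos X (extsup X V E \<rho>)) \<and>
     (\<forall>\<rho>. pos V \<rho> \<longrightarrow> Re (trace V (E \<rho>)) \<le> Re (trace V \<rho>))}"

definition NProg :: "qvar set \<Rightarrow> sop set set" where
  "NProg V = {\<EE>. \<EE> \<noteq> {} \<and> \<EE> \<subseteq> DProg V \<and>
     (\<forall>E1\<in>\<EE>. \<forall>E2\<in>\<EE>. \<forall>p::real. 0 \<le> p \<and> p \<le> 1 \<longrightarrow>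
        (\<lambda>A f g. complex_of_real p * E1 A f g + complex_of_real (1 - p) * E2 A f g) \<in> \<EE>) \<and>
     (\<forall>s E. (\<forall>n::nat. s n \<in> \<EE>) \<longrightarrow> E \<in> DProg V \<longrightarrow>
        (\<forall>A f g. (\<lambda>n. s n A f g) \<longlonglongrightarrow> E A f g) \<longrightarrow> E \<in> \<EE>)}"

definition sat_tot :: "qvar set \<Rightarrow> sop set \<Rightarrow> qvar set \<Rightarrow> qop \<Rightarrow> qop \<Rightarrow> bool" where
  "sat_tot V \<EE> W M N \<longleftrightarrow>
     (\<forall>X \<rho>. finite X \<longrightarrow> V \<union> W \<subseteq> X \<longrightarrow> density X \<rho> \<longrightarrow>
        Re (trace X (mult X (extop X W M) \<rho>)) \<le>
        (INF E\<in>\<EE>. Re (trace X (mult X (extop X W N) (extsup X V E \<rho>)))))"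

definition sat_par :: "qvar set \<Rightarrow> sop set \<Rightarrow> qvar set \<Rightarrow> qop \<Rightarrow> qop \<Rightarrow> bool" where
  "sat_par V \<EE> W M N \<longleftrightarrow>
     (\<forall>X \<rho>. finite X \<longrightarrow> V \<union> W \<subseteq> X \<longrightarrow> density X \<rho> \<longrightarrow>
        Re (trace X (mult X (extop X W M) \<rho>)) \<le>
        (INF E\<in>\<EE>. Re (trace X (mult X (extop X W N) (extsup X V E \<rho>)))
                   + Re (trace X \<rho>) - Re (trace X (extsup X V E \<rho>))))"

definition le_T_e :: "qvar set \<Rightarrow> sop set \<Rightarrow> sop set \<Rightarrow> bool" where
  "le_T_e V \<EE> \<FF> \<longleftrightarrow> (\<forall>W M N. finite W \<longrightarrow> effect W M \<longrightarrow> effect W N \<longrightarrow>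
      sat_tot V \<EE> W M N \<longrightarrow> sat_tot V \<FF> W M N)"

definition le_T_p :: "qvar set \<Rightarrow> sop set \<Rightarrow> sop set \<Rightarrow> bool" where
  "le_T_p V \<EE> \<FF> \<longleftrightarrow> (\<forall>W M N. finite W \<longrightarrow> projector W M \<longrightarrow> projector W N \<longrightarrow>
      sat_tot V \<EE> W M N \<longrightarrow> sat_tot V \<FF> W M N)"

definition le_P_e :: "qvar set \<Rightarrow> sop set \<Rightarrow> sop set \<Rightarrow> bool" where
  "le_P_e V \<EE> \<FF> \<longleftrightarrow> (\<forall>W M N. finite W \<longrightarrow> effect W M \<longrightarrow> effect W N \<longrightarrow>
      sat_par V \<EE> W M N \<longrightarrow> sat_par V \<FF> W M N)"

definition le_P_p :: "qvar set \<Rightarrow> sop set \<Rightarrow> sop set \<Rightarrow> bool" where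
  "le_P_p V \<EE> \<FF> \<longleftrightarrow> (\<forall>W M N. finite W \<longrightarrow> projector W M \<longrightarrow> projector W N \<longrightarrow>
      sat_par V \<EE> W M N \<longrightarrow> sat_par V \<FF> W M N)"

end

theory Submission
  imports Defs
begin

lemma basis_empty: "basis {} = {\<lambda>_. False}" by (auto simp: basis_def fun_eq_iff)

lemma finite_basis: assumes "finite X" shows "finite (basis X)"
proof -
  have "basis X \<subseteq> (\<lambda>S i. i \<in> S) ` Pow X"
  proof
    fix f assume "f \<in> basis X"
    then have "f = (\<lambda>i. i \<in> {i. f i})" "{i. f i} \<subseteq> X" by (auto simp: basis_def)
    then show "f \<in> (\<lambda>S i. i \<in> S) ` Pow X" by blast
  qed
  then show ?thesis using assms by (meson finite_Pow_iff finite_imageI finite_subset)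
qed

lemma op_onD: "op_on X A \<Longrightarrow> f \<notin> basis X \<or> g \<notin> basis X \<Longrightarrow> A f g = 0"
  by (auto simp: op_on_def)

lemma extop_op_on: "op_on X (extop X W A)"
  by (auto simp: op_on_def extop_def)

lemma adj_extop: "adj (extop X W A) = extop X W (adj A)"
  by (auto simp: adj_def extop_def fun_eq_iff)

lemma extop_mult:
  assumes "W \<subseteq> X" "finite X"
  shows "mult X (extop X W A) (extop X W B) = extop X W (mult W A B)"
proof (intro ext)
  fix f g
  show "mult X (extop X W A) (extop X W B) f g = extop X W (mult W A B) f g"
  proof (cases "f \<in> basis X \<and> g \<in> basis X \<and> (\<forall>i. i \<notin> W \<longrightarrow> f i = g i)")
    case True
    let ?T = "{h \<in> basis X. \<forall>i. i \<notin> W \<longrightarrow> f i = h i}"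
    have "mult X (extop X W A) (extop X W B) f g =
       (\<Sum>h\<in>basis X. if (\<forall>i. i \<notin> W \<longrightarrow> f i = h i) then extop X W A f h * extop X W B h g else 0)"
      unfolding mult_def by (rule sum.cong) (auto simp: extop_def)
    also have "\<dots> = (\<Sum>h\<in>?T. extop X W A f h * extop X W B h g)"
      by (rule sum.inter_filter[symmetric]) (rule finite_basis[OF assms(2)])
    also have "\<dots> = (\<Sum>k\<in>basis W. A (res W f) k * B k (res W g))"
    proof (rule sum.reindex_bij_witness[where j="res W" and i="\<lambda>k. merge W k f"])
      fix k assume "k \<in> basis W"
      then show r: "res W (merge W k f) = k"
        by (auto simp: res_def merge_def basis_def fun_eq_iff)
      show m: "merge W k f \<in> ?T" using \<open>k \<in> basis W\<close> True assms(1)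
        by (auto simp: merge_def basis_def)
    next
      fix h assume h: "h \<in> ?T"
      then show "merge W (res W h) f = h" by (auto simp: res_def merge_def fun_eq_iff)
      show "res W h \<in> basis W" by (auto simp: res_def basis_def)
      show "A (res W f) (res W h) * B (res W h) (res W g) = extop X W A f h * extop X W B h g"
        using h True by (auto simp: extop_def)
    qed
    also have "\<dots> = extop X W (mult W A B) f g"
      using True by (simp add: extop_def mult_def)
    finally show ?thesis .
  next
    case False
    have "mult X (extop X W A) (extop X W B) f g = 0"
      unfolding mult_def using False by (intro sum.neutral) (auto simp: extop_def)
    moreover have "extop X W (mult W A B) f g = 0" using False unfolding extop_def by meson
    ultimately show ?thesis by simp
  qed
qed

lemma projector_extop:
  assumes "W \<subseteq> X" "finite X" "projector W P"
  shows "projector X (extop X W P)"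
  using assms by (simp add: projector_def extop_op_on adj_extop extop_mult)

definition qf :: "qvar set \<Rightarrow> qop \<Rightarrow> (bstate \<Rightarrow> complex) \<Rightarrow> complex" where
  "qf X A v = (\<Sum>f\<in>basis X. \<Sum>g\<in>basis X. cnj (v f) * A f g * v g)"

lemma proj_sq:
  assumes "projector X A" shows "A f g = (\<Sum>h\<in>basis X. cnj (A h f) * A h g)"
proof -
  have a: "A f h = cnj (A h f)" for h
    using assms unfolding projector_def adj_def by (metis)
  have "A f g = mult X A A f g" using assms by (simp add: projector_def)
  also have "\<dots> = (\<Sum>h\<in>basis X. cnj (A h f) * A h g)" unfolding mult_def
    by (rule sum.cong) (auto simp: a[symmetric])
  finally show ?thesis .
qed

lemma proj_qf:
  assumes "projector X A"
  shows "qf X A v = (\<Sum>h\<in>basis X. of_real ((cmod (\<Sum>g\<in>basis X. A h g * v g))^2))"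
proof -
  have "qf X A v = (\<Sum>f\<in>basis X. \<Sum>g\<in>basis X. \<Sum>h\<in>basis X. cnj (v f) * cnj (A h f) * A h g * v g)"
    unfolding qf_def
    by (subst proj_sq[OF assms]) (simp add: sum_distrib_left sum_distrib_right mult_ac)
  also have "\<dots> = (\<Sum>f\<in>basis X. \<Sum>h\<in>basis X. \<Sum>g\<in>basis X. cnj (v f) * cnj (A h f) * A h g * v g)"
    by (rule sum.cong[OF refl], rule sum.swap)
  also have "\<dots> = (\<Sum>h\<in>basis X. \<Sum>f\<in>basis X. \<Sum>g\<in>basis X. cnj (v f) * cnj (A h f) * A h g * v g)"
    by (rule sum.swap)
  also have "\<dots> = (\<Sum>h\<in>basis X. (\<Sum>g\<in>basis X. A h g * v g) * cnj (\<Sum>f\<in>basis X. A h f * v f))"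
  proof (rule sum.cong[OF refl])
    fix h
    show "(\<Sum>f\<in>basis X. \<Sum>g\<in>basis X. cnj (v f) * cnj (A h f) * A h g * v g) =
      (\<Sum>g\<in>basis X. A h g * v g) * cnj (\<Sum>f\<in>basis X. A h f * v f)"
      by (simp add: sum_product mult.commute[of "\<Sum>g\<in>basis X. A h g * v g"] mult_ac) (rule sum.swap)
  qed
  also have "\<dots> = (\<Sum>h\<in>basis X. of_real ((cmod (\<Sum>g\<in>basis X. A h g * v g))^2))"
    by (simp only: complex_norm_square)
  finally show ?thesis .
qed

lemma proj_pos: assumes "projector X A" shows "pos X A"
  unfolding pos_def Let_def
proof (intro conjI allI)
  show "op_on X A" using assms by (simp add: projector_def)
  fix v
  have e: "(\<Sum>f\<in>basis X. \<Sum>g\<in>basis X. cnj (v f) * A f g * v g) =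
     of_real (\<Sum>h\<in>basis X. (cmod (\<Sum>g\<in>basis X. A h g * v g))^2)"
    using proj_qf[OF assms, of v] by (simp add: qf_def)
  show "Im (\<Sum>f\<in>basis X. \<Sum>g\<in>basis X. cnj (v f) * A f g * v g) = 0"
    unfolding e by simp
  show "0 \<le> Re (\<Sum>f\<in>basis X. \<Sum>g\<in>basis X. cnj (v f) * A f g * v g)"
    unfolding e by (simp add: sum_nonneg)
qed

lemma idop_sym: "idop X g f = idop X f g"
  by (auto simp: idop_def)

lemma mult_idop_left: assumes "op_on X A" "finite X" shows "mult X (idop X) A = A"
proof (intro ext)
  fix f g
  show "mult X (idop X) A f g = A f g"
  proof (cases "f \<in> basis X")
    case True
    have "mult X (idop X) A f g = (\<Sum>h\<in>basis X. if f = h then A h g else 0)"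
      unfolding mult_def by (rule sum.cong) (auto simp: idop_def True)
    also have "\<dots> = A f g" using True finite_basis[OF assms(2)] by simp
    finally show ?thesis .
  next
    case False
    then show ?thesis using op_onD[OF assms(1)] by (simp add: mult_def idop_def)
  qed
qed

lemma mult_idop_right: assumes "op_on X A" "finite X" shows "mult X A (idop X) = A"
proof (intro ext)
  fix f g
  show "mult X A (idop X) f g = A f g"
  proof (cases "g \<in> basis X")
    case True
    have "mult X A (idop X) f g = (\<Sum>h\<in>basis X. if h = g then A f h else 0)"
      unfolding mult_def by (rule sum.cong) (auto simp: idop_def True)
    also have "\<dots> = A f g" using True finite_basis[OF assms(2)] by simp
    finally show ?thesis .
  next
    case False
    have "mult X A (idop X) f g = 0" unfolding mult_def
      by (rule sum.neutral) (use False in \<open>auto simp: idop_def\<close>)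
    then show ?thesis using False op_onD[OF assms(1)] by simp
  qed
qed

lemma mult_diff_left: "mult X (\<lambda>f g. A f g - B f g) C = (\<lambda>f g. mult X A C f g - mult X B C f g)"
  by (simp add: mult_def fun_eq_iff algebra_simps sum_subtractf)

lemma mult_diff_right: "mult X C (\<lambda>f g. A f g - B f g) = (\<lambda>f g. mult X C A f g - mult X C B f g)"
  by (simp add: mult_def fun_eq_iff algebra_simps sum_subtractf)

lemma idop_op_on: "op_on X (idop X)" by (auto simp: op_on_def idop_def split: if_splits)

lemma idop_idem: "finite X \<Longrightarrow> mult X (idop X) (idop X) = idop X"
  by (simp add: mult_idop_left idop_op_on)

lemma projector_compl:
  assumes "finite X" "projector X A"
  shows "projector X (\<lambda>f g. idop X f g - A f g)"
proof -
  have o: "op_on X A" "A = mult X A A" using assms by (auto simp: projector_def)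
  have "mult X (\<lambda>f g. idop X f g - A f g) (\<lambda>f g. idop X f g - A f g) = (\<lambda>f g. idop X f g - A f g)"
    unfolding mult_diff_left mult_diff_right
    by (simp add: mult_idop_left mult_idop_right idop_op_on assms(1) o(1) idop_idem o(2)[symmetric])
  moreover have "adj (\<lambda>f g. idop X f g - A f g) = (\<lambda>f g. idop X f g - A f g)"
  proof -
    have "cnj (A g f) = A f g" for f g using assms(2) unfolding projector_def adj_def by metis
    moreover have "cnj (idop X g f) = idop X f g" for f g by (auto simp: idop_def)
    ultimately show ?thesis unfolding adj_def by (intro ext) simp
  qed
  moreover have "op_on X (\<lambda>f g. idop X f g - A f g)"
    using o(1) by (auto simp: op_on_def idop_def split: if_splits)
  ultimately show ?thesis by (simp add: projector_def)
qed

lemma projector_effect: "finite X \<Longrightarrow> projector X A \<Longrightarrow> effect X A"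
  by (simp add: effect_def proj_pos projector_compl)

lemma trace_mult_rank1:
  "trace X (mult X A (\<lambda>g h. c * v g * cnj (v h))) = c * qf X A v"
  unfolding trace_def mult_def qf_def
  by (simp add: sum_distrib_left mult_ac)

lemma qf_diff: "qf X (\<lambda>f g. A f g - B f g) v = qf X A v - qf X B v"
  unfolding qf_def by (simp add: algebra_simps sum_subtractf)

lemma cnj_self: "cnj z * z = of_real ((cmod z)^2)"
  by (subst complex_norm_square) (simp add: mult.commute)

lemma qf_idop: assumes "finite X"
  shows "qf X (idop X) v = of_real (\<Sum>g\<in>basis X. (cmod (v g))^2)"
proof -
  have "qf X (idop X) v = (\<Sum>f\<in>basis X. \<Sum>g\<in>basis X. if f = g then cnj (v f) * v g else 0)"
    unfolding qf_def by (intro sum.cong refl) (auto simp: idop_def)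
  also have "\<dots> = (\<Sum>f\<in>basis X. cnj (v f) * v f)"
    using finite_basis[OF assms] by simp
  finally show ?thesis by (simp add: cnj_self)
qed

lemma qf_col: assumes "projector X P"
  shows "qf X P (\<lambda>g. P g f0) = of_real (\<Sum>g\<in>basis X. (cmod (P g f0))^2)"
proof -
  have m: "mult X P P = P" using assms by (simp add: projector_def)
  have "qf X P (\<lambda>g. P g f0) = (\<Sum>f\<in>basis X. cnj (P f f0) * mult X P P f f0)"
    unfolding qf_def mult_def by (simp add: sum_distrib_left mult_ac)
  also have "\<dots> = (\<Sum>f\<in>basis X. cnj (P f f0) * P f f0)" by (simp add: m)
  finally show ?thesis by (simp add: cnj_self)
qed

lemma rank1_density:
  fixes f0 :: bstate
  assumes "finite X" "op_on X P"
  defines "n \<equiv> (\<Sum>g\<in>basis X. (cmod (P g f0))^2)"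
  shows "density X (\<lambda>g h. of_real (1 / (1 + n)) * P g f0 * cnj (P h f0))"
    and "Re (trace X (\<lambda>g h. of_real (1 / (1 + n)) * P g f0 * cnj (P h f0))) = n / (1 + n)"
proof -
  have n0: "n \<ge> 0" unfolding n_def by (simp add: sum_nonneg)
  let ?t = "1 / (1 + n)"
  have tr: "trace X (\<lambda>g h. of_real ?t * P g f0 * cnj (P h f0)) = of_real (?t * n)"
  proof -
    have e: "P f f0 * cnj (P f f0) = of_real ((cmod (P f f0))^2)" for f
      by (simp only: complex_norm_square)
    have "trace X (\<lambda>g h. of_real ?t * P g f0 * cnj (P h f0)) =
       of_real ?t * (\<Sum>f\<in>basis X. P f f0 * cnj (P f f0))"
      unfolding trace_def by (simp add: sum_distrib_left mult.assoc)
    also have "\<dots> = of_real ?t * of_real n" unfolding e n_def by simp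
    finally show ?thesis by simp
  qed
  then show t2: "Re (trace X (\<lambda>g h. of_real (1 / (1 + n)) * P g f0 * cnj (P h f0))) = n / (1 + n)"
    by simp
  have oo: "op_on X (\<lambda>g h. of_real ?t * P g f0 * cnj (P h f0))"
    using assms(2) unfolding op_on_def by auto
  have q: "(\<Sum>f\<in>basis X. \<Sum>g\<in>basis X. cnj (u f) * (of_real ?t * P f f0 * cnj (P g f0)) * u g)
     = of_real (?t * (cmod (\<Sum>f\<in>basis X. cnj (u f) * P f f0))^2)" for u
  proof -
    have "(\<Sum>f\<in>basis X. \<Sum>g\<in>basis X. cnj (u f) * (of_real ?t * P f f0 * cnj (P g f0)) * u g)
      = of_real ?t * ((\<Sum>f\<in>basis X. cnj (u f) * P f f0) * cnj (\<Sum>f\<in>basis X. cnj (u f) * P f f0))"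
      by (simp add: sum_product sum_distrib_left mult_ac)
    also have "\<dots> = of_real (?t * (cmod (\<Sum>f\<in>basis X. cnj (u f) * P f f0))^2)"
      by (simp only: complex_norm_square[symmetric] of_real_mult)
    finally show ?thesis .
  qed
  have "pos X (\<lambda>g h. of_real ?t * P g f0 * cnj (P h f0))"
    unfolding pos_def Let_def using oo q n0 by simp
  moreover have "n / (1 + n) \<le> 1" using n0 by simp
  ultimately show "density X (\<lambda>g h. of_real (1 / (1 + n)) * P g f0 * cnj (P h f0))"
    unfolding density_def using t2 by simp
qed

lemma trace_scale: "trace X (\<lambda>f g. c * A f g) = c * trace X A"
  by (simp add: trace_def sum_distrib_left)

lemma trace_mult_scale: "trace X (mult X A (\<lambda>f g. c * B f g)) = c * trace X (mult X A B)"
  by (simp add: trace_def mult_def sum_distrib_left mult_ac)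

lemma adj_mult: "adj (mult X A B) = mult X (adj B) (adj A)"
  by (simp add: adj_def mult_def fun_eq_iff mult.commute)

lemma trace_mult_diff:
  "trace X (mult X (\<lambda>f g. A f g - B f g) C) = trace X (mult X A C) - trace X (mult X B C)"
  by (simp add: mult_diff_left trace_def sum_subtractf)

lemma col_analysis:
  fixes f0 :: bstate
  assumes X: "finite X" and P: "projector X P" and Q: "projector X Q"
  defines "n \<equiv> (\<Sum>g\<in>basis X. (cmod (P g f0))^2)"
  defines "S \<equiv> (\<Sum>h\<in>basis X. (cmod (\<Sum>g\<in>basis X. (idop X h g - Q h g) * P g f0))^2)"
  defines "\<rho> \<equiv> (\<lambda>g h. of_real (1 / (1 + n)) * P g f0 * cnj (P h f0))"
  shows "density X \<rho>"
    and "Re (trace X \<rho>) = n / (1 + n)"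
    and "Re (trace X (mult X P \<rho>)) = n / (1 + n)"
    and "Re (trace X (mult X Q (\<lambda>f g. (1/2) * \<rho> f g))) = (n - S) / (2 * (1 + n))"
    and "Re (trace X (\<lambda>f g. (1/2) * \<rho> f g)) = n / (2 * (1 + n))"
    and "n \<ge> 0" and "S \<ge> 0"
proof -
  have oP: "op_on X P" using P by (simp add: projector_def)
  show d: "density X \<rho>" and tr: "Re (trace X \<rho>) = n / (1 + n)"
    using rank1_density[OF X oP, of f0] unfolding \<rho>_def n_def by auto
  show "n \<ge> 0" unfolding n_def by (simp add: sum_nonneg)
  show "S \<ge> 0" unfolding S_def by (simp add: sum_nonneg)
  show "Re (trace X (mult X P \<rho>)) = n / (1 + n)"
    unfolding \<rho>_def trace_mult_rank1 qf_col[OF P] n_def by simp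
  have h: "(\<lambda>f g. (1/2) * \<rho> f g) = (\<lambda>g h. ((1/2) * of_real (1 / (1 + n))) * P g f0 * cnj (P h f0))"
    unfolding \<rho>_def by (simp add: mult_ac)
  have "qf X Q (\<lambda>g. P g f0) = qf X (idop X) (\<lambda>g. P g f0) - qf X (\<lambda>f g. idop X f g - Q f g) (\<lambda>g. P g f0)"
    by (simp add: qf_diff)
  also have "\<dots> = of_real n - of_real S"
    unfolding qf_idop[OF X] proj_qf[OF projector_compl[OF X Q]] n_def S_def by simp
  finally have qQ: "qf X Q (\<lambda>g. P g f0) = of_real (n - S)" by simp
  show "Re (trace X (mult X Q (\<lambda>f g. (1/2) * \<rho> f g))) = (n - S) / (2 * (1 + n))"
    unfolding h trace_mult_rank1 qQ by simp
  show "Re (trace X (\<lambda>f g. (1/2) * \<rho> f g)) = n / (2 * (1 + n))"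
    unfolding trace_scale using tr by simp
qed

lemma tot_core:
  assumes X: "finite X" and P: "projector X P" and Q: "projector X Q"
    and H: "\<forall>\<rho>. density X \<rho> \<longrightarrow>
       Re (trace X (mult X P \<rho>)) \<le> Re (trace X (mult X Q (\<lambda>f g. (1/2) * \<rho> f g)))"
  shows "P g f0 = 0"
proof (cases "g \<in> basis X")
  case False
  then show ?thesis using P op_onD by (auto simp: projector_def)
next
  case True
  define n where "n = (\<Sum>g\<in>basis X. (cmod (P g f0))^2)"
  define S where "S = (\<Sum>h\<in>basis X. (cmod (\<Sum>g\<in>basis X. (idop X h g - Q h g) * P g f0))^2)"
  note c = col_analysis[OF X P Q, of f0, folded n_def S_def]
  have "n / (1 + n) \<le> (n - S) / (2 * (1 + n))"
    using H c(1) c(3) c(4) by metis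
  moreover have "n / (1 + n) = (2 * n) / (2 * (1 + n))"
    by (metis mult_divide_mult_cancel_left_if zero_neq_numeral)
  ultimately have "(2 * n) / (2 * (1 + n)) \<le> (n - S) / (2 * (1 + n))" by simp
  then have "2 * n \<le> n - S" using c(6) by (simp add: divide_le_cancel)
  with c(7) have "n \<le> 0" by simp
  with c(6) have "n = 0" by simp
  then have "\<forall>g\<in>basis X. (cmod (P g f0))^2 = 0"
    unfolding n_def by (subst (asm) sum_nonneg_eq_0_iff) (auto simp: finite_basis[OF X])
  then show ?thesis using True by simp
qed

lemma par_core:
  assumes X: "finite X" and P: "projector X P" and Q: "projector X Q"
    and H: "\<forall>\<rho>. density X \<rho> \<longrightarrow>
       Re (trace X (mult X P \<rho>)) \<le> Re (trace X (mult X Q (\<lambda>f g. (1/2) * \<rho> f g)))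
          + Re (trace X \<rho>) - Re (trace X (\<lambda>f g. (1/2) * \<rho> f g))"
  shows "mult X Q P h f0 = P h f0"
proof (cases "h \<in> basis X")
  case False
  have "mult X Q P h f0 = 0" unfolding mult_def
    using Q op_onD False by (auto simp: projector_def intro!: sum.neutral)
  then show ?thesis using False P op_onD by (auto simp: projector_def)
next
  case True
  define n where "n = (\<Sum>g\<in>basis X. (cmod (P g f0))^2)"
  define S where "S = (\<Sum>h\<in>basis X. (cmod (\<Sum>g\<in>basis X. (idop X h g - Q h g) * P g f0))^2)"
  note c = col_analysis[OF X P Q, of f0, folded n_def S_def]
  have "n / (1 + n) \<le> (n - S) / (2 * (1 + n)) + n / (1 + n) - n / (2 * (1 + n))"
    using H c(1) c(2) c(3) c(4) c(5) by metis
  moreover have "(n - S) / (2 * (1 + n)) - n / (2 * (1 + n)) = - (S / (2*(1+n)))"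
    by (simp add: diff_divide_distrib)
  ultimately have "S / (2*(1+n)) \<le> 0" by linarith
  with c(6) have "S \<le> 0" by (simp add: divide_le_0_iff)
  with c(7) have "S = 0" by simp
  then have "\<forall>h\<in>basis X. (cmod (\<Sum>g\<in>basis X. (idop X h g - Q h g) * P g f0))^2 = 0"
    unfolding S_def by (subst (asm) sum_nonneg_eq_0_iff) (auto simp: finite_basis[OF X])
  then have z: "(\<Sum>g\<in>basis X. (idop X h g - Q h g) * P g f0) = 0" using True by simp
  have "(\<Sum>g\<in>basis X. (idop X h g - Q h g) * P g f0) =
     (\<Sum>g\<in>basis X. idop X h g * P g f0) - mult X Q P h f0"
    unfolding mult_def by (simp add: algebra_simps sum_subtractf)
  also have "(\<Sum>g\<in>basis X. idop X h g * P g f0) = mult X (idop X) P h f0"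
    by (simp add: mult_def)
  also have "\<dots> = P h f0" using P X by (simp add: mult_idop_left projector_def)
  finally show ?thesis using z by simp
qed

lemma proj_trace_nonneg:
  assumes X: "finite X" and R: "projector X R" and r: "pos X \<rho>"
  shows "Re (trace X (mult X R \<rho>)) \<ge> 0"
proof -
  have "trace X (mult X R \<rho>) = (\<Sum>f\<in>basis X. \<Sum>h\<in>basis X. \<Sum>k\<in>basis X. cnj (R k f) * R k h * \<rho> h f)"
    unfolding trace_def mult_def by (subst proj_sq[OF R]) (simp add: sum_distrib_right)
  also have "\<dots> = (\<Sum>f\<in>basis X. \<Sum>k\<in>basis X. \<Sum>h\<in>basis X. cnj (R k f) * R k h * \<rho> h f)"
    by (rule sum.cong[OF refl], rule sum.swap)
  also have "\<dots> = (\<Sum>k\<in>basis X. \<Sum>f\<in>basis X. \<Sum>h\<in>basis X. cnj (R k f) * R k h * \<rho> h f)"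
    by (rule sum.swap)
  also have "\<dots> = (\<Sum>k\<in>basis X. \<Sum>a\<in>basis X. \<Sum>b\<in>basis X. cnj (cnj (R k a)) * \<rho> a b * cnj (R k b))"
    by (rule sum.cong[OF refl], rule trans[OF sum.swap]) (simp add: mult_ac)
  finally have e: "trace X (mult X R \<rho>) = \<dots>" .
  have pv: "0 \<le> Re (\<Sum>f\<in>basis X. \<Sum>g\<in>basis X. cnj (v f) * \<rho> f g * v g)" for v
    using r unfolding pos_def Let_def by blast
  have "Re (\<Sum>a\<in>basis X. \<Sum>b\<in>basis X. cnj (cnj (R k a)) * \<rho> a b * cnj (R k b)) \<ge> 0" for k
    using pv[of "\<lambda>b. cnj (R k b)"] by simp
  then show ?thesis unfolding e Re_sum by (simp add: sum_nonneg)
qed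

lemma par_le:
  assumes X: "finite X" and P: "projector X P" and Q: "projector X Q"
    and H: "\<forall>\<rho>. density X \<rho> \<longrightarrow>
       Re (trace X (mult X P \<rho>)) \<le> Re (trace X (mult X Q (\<lambda>f g. (1/2) * \<rho> f g)))
          + Re (trace X \<rho>) - Re (trace X (\<lambda>f g. (1/2) * \<rho> f g))"
    and r: "pos X \<rho>"
  shows "Re (trace X (mult X P \<rho>)) \<le> Re (trace X (mult X Q \<rho>))"
proof -
  have QP: "mult X Q P = P" using par_core[OF X P Q H] by (intro ext)
  have aP: "adj P = P" and aQ: "adj Q = Q" and PP: "mult X P P = P" and QQ: "mult X Q Q = Q"
    and oP: "op_on X P" and oQ: "op_on X Q"
    using P Q by (auto simp: projector_def)
  have PQ: "mult X P Q = P" using arg_cong[OF QP, of adj] by (simp add: adj_mult aP aQ)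
  have "projector X (\<lambda>f g. Q f g - P f g)"
    unfolding projector_def
  proof (intro conjI)
    show "op_on X (\<lambda>f g. Q f g - P f g)"
      unfolding op_on_def
    proof (intro allI impI)
      fix f g assume "Q f g - P f g \<noteq> 0"
      then show "f \<in> basis X \<and> g \<in> basis X" using op_onD[OF oP, of f g] op_onD[OF oQ, of f g] by (cases "f \<in> basis X"; cases "g \<in> basis X") auto
    qed
    show "adj (\<lambda>f g. Q f g - P f g) = (\<lambda>f g. Q f g - P f g)"
      using aP aQ by (simp add: adj_def fun_eq_iff)
    show "mult X (\<lambda>f g. Q f g - P f g) (\<lambda>f g. Q f g - P f g) = (\<lambda>f g. Q f g - P f g)"
      unfolding mult_diff_left mult_diff_right by (simp add: QP PQ PP QQ)
  qed
  from proj_trace_nonneg[OF X this r] show ?thesis unfolding trace_mult_diff by simp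
qed

definition Ec :: "complex \<Rightarrow> sop" where
  "Ec c = (\<lambda>A f g. c * restrict_op {} A f g)"

lemma res_UNIV: "res (- {}) f = f" "res UNIV f = f" by (simp_all add: res_def)
lemma merge_empty: "merge {} u a = a" by (simp add: merge_def)
lemma res_empty_basis: "res {} f \<in> basis {}" by (simp add: res_def basis_def)

lemma extsup_Ec: assumes "op_on X \<rho>" shows "extsup X {} (Ec c) \<rho> = (\<lambda>f g. c * \<rho> f g)"
proof (intro ext)
  fix f g
  show "extsup X {} (Ec c) \<rho> f g = c * \<rho> f g"
    using op_onD[OF assms, of f g]
    by (auto simp: extsup_def Ec_def restrict_op_def block_def res_UNIV merge_empty res_empty_basis)
qed

lemma pos_scale: assumes "pos X \<rho>" "0 \<le> r" shows "pos X (\<lambda>f g. of_real r * \<rho> f g)"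
proof -
  have e: "(\<Sum>f\<in>basis X. \<Sum>g\<in>basis X. cnj (v f) * (of_real r * \<rho> f g) * v g) =
     of_real r * (\<Sum>f\<in>basis X. \<Sum>g\<in>basis X. cnj (v f) * \<rho> f g * v g)" for v
    by (simp add: sum_distrib_left mult_ac)
  have "op_on X (\<lambda>f g. of_real r * \<rho> f g)" using assms(1) by (auto simp: pos_def op_on_def)
  then show ?thesis using assms unfolding pos_def Let_def e by simp
qed

lemma trace_empty: "trace {} A = A (\<lambda>_. False) (\<lambda>_. False)"
  by (simp add: trace_def basis_empty)

lemma Ec_DProg: assumes "0 \<le> r" "r \<le> 1" shows "Ec (of_real r) \<in> DProg {}"
  unfolding DProg_def
proof (intro CollectI conjI allI impI)
  fix A show "Ec (of_real r) A = Ec (of_real r) (restrict_op {} A)"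
    by (simp add: Ec_def restrict_op_def fun_eq_iff)
  show "op_on {} (Ec (of_real r) A)" by (simp add: op_on_def Ec_def restrict_op_def)
  fix B show "Ec (of_real r) (\<lambda>f g. A f g + B f g) = (\<lambda>f g. Ec (of_real r) A f g + Ec (of_real r) B f g)"
    by (simp add: Ec_def restrict_op_def fun_eq_iff algebra_simps)
next
  fix c A show "Ec (of_real r) (\<lambda>f g. c * A f g) = (\<lambda>f g. c * Ec (of_real r) A f g)"
    by (simp add: Ec_def restrict_op_def fun_eq_iff algebra_simps)
next
  fix X :: "qvar set" and \<rho> assume "finite X" "{} \<subseteq> X" "pos X \<rho>"
  then show "pos X (extsup X {} (Ec (of_real r)) \<rho>)"
    using extsup_Ec[of X \<rho>] pos_scale[OF _ assms(1)] by (simp add: pos_def)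
next
  fix \<rho> assume p: "pos {} \<rho>"
  let ?z = "\<lambda>_::qvar. False"
  have pv: "0 \<le> Re (\<Sum>f\<in>basis {}. \<Sum>g\<in>basis {}. cnj (v f) * \<rho> f g * v g)" for v
    using p unfolding pos_def Let_def by blast
  have "0 \<le> Re (\<rho> ?z ?z)" using pv[of "\<lambda>_. 1"] by (simp add: basis_empty)
  moreover have "Ec (of_real r) \<rho> ?z ?z = of_real r * \<rho> ?z ?z"
    by (simp add: Ec_def restrict_op_def basis_empty)
  ultimately show "Re (trace {} (Ec (of_real r) \<rho>)) \<le> Re (trace {} \<rho>)"
    unfolding trace_empty using assms by (simp add: mult_left_le_one_le)
qed

lemma Ec_NProg: assumes "0 \<le> r" "r \<le> 1" shows "{Ec (of_real r)} \<in> NProg {}"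
  unfolding NProg_def
proof (intro CollectI conjI ballI allI impI)
  show "{Ec (of_real r)} \<noteq> {}" by simp
  show "{Ec (of_real r)} \<subseteq> DProg {}" using Ec_DProg[OF assms] by simp
next
  fix E1 E2 and p :: real assume "E1 \<in> {Ec (of_real r)}" "E2 \<in> {Ec (of_real r)}" "0 \<le> p \<and> p \<le> 1"
  then show "(\<lambda>A f g. complex_of_real p * E1 A f g + complex_of_real (1 - p) * E2 A f g) \<in> {Ec (of_real r)}"
    by (simp add: fun_eq_iff algebra_simps of_real_diff)
next
  fix s :: "nat \<Rightarrow> sop" and E
  assume s: "\<forall>n. s n \<in> {Ec (of_real r)}" and l: "\<forall>A f g. (\<lambda>n. s n A f g) \<longlonglongrightarrow> E A f g"
  have "E A f g = Ec (of_real r) A f g" for A f g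
  proof -
    have "(\<lambda>n. s n A f g) = (\<lambda>n. Ec (of_real r) A f g)" using s by simp
    then have "(\<lambda>n. Ec (of_real r) A f g) \<longlonglongrightarrow> E A f g" using l by metis
    then show ?thesis using LIMSEQ_unique tendsto_const by metis
  qed
  then show "E \<in> {Ec (of_real r)}" by (simp add: fun_eq_iff)
qed

lemma extop_scaled_id: "extop X {} (\<lambda>f g. c * idop {} f g) = (\<lambda>f g. c * idop X f g)"
proof (intro ext)
  fix f g :: bstate
  have "(\<forall>i. i \<notin> {} \<longrightarrow> f i = g i) \<longleftrightarrow> f = g" by (auto simp: fun_eq_iff)
  moreover have "idop {} (res {} f) (res {} g) = 1" by (simp add: idop_def res_def basis_def)
  ultimately show "extop X {} (\<lambda>f g. c * idop {} f g) f g = c * idop X f g"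
    by (auto simp: extop_def idop_def)
qed

lemma mult_scale_left: "mult X (\<lambda>f g. c * A f g) B = (\<lambda>f g. c * mult X A B f g)"
  by (simp add: mult_def sum_distrib_left mult_ac fun_eq_iff)

lemma trace_mult_scaled_id:
  "finite X \<Longrightarrow> op_on X \<rho> \<Longrightarrow> trace X (mult X (\<lambda>f g. c * idop X f g) \<rho>) = c * trace X \<rho>"
  by (simp add: mult_scale_left mult_idop_left trace_scale)

lemma pos_idop: "finite X \<Longrightarrow> pos X (idop X)"
  using qf_idop[of X] unfolding pos_def qf_def Let_def by (simp add: idop_op_on sum_nonneg)

lemma density_id0: "density {} (idop {})"
  unfolding density_def using pos_idop[of "{}"] by (simp add: trace_empty idop_def basis_empty)

lemma effect_scaled: assumes "finite X" "0 \<le> r" "r \<le> 1"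
  shows "effect X (\<lambda>f g. of_real r * idop X f g)"
proof -
  have "(\<lambda>f g. idop X f g - of_real r * idop X f g) = (\<lambda>f g. of_real (1 - r) * idop X f g)"
    by (simp add: fun_eq_iff algebra_simps)
  moreover have "pos X (\<lambda>f g. of_real (1 - r) * idop X f g)"
    by (rule pos_scale[OF pos_idop[OF assms(1)]]) (use assms in simp)
  moreover have "pos X (\<lambda>f g. of_real r * idop X f g)"
    by (rule pos_scale[OF pos_idop[OF assms(1)]]) (use assms in simp)
  ultimately show ?thesis unfolding effect_def by (simp only:)
qed

lemma trace_id0: "trace {} (idop {}) = 1"
  by (simp add: trace_empty idop_def basis_empty)

lemma op_on_scale: "op_on X A \<Longrightarrow> op_on X (\<lambda>f g. c * A f g)"
  by (auto simp: op_on_def)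

lemma INF_single: "(INF E\<in>{a}. F E) = (F a :: real)" by simp

lemma density_op_on: "density X \<rho> \<Longrightarrow> op_on X \<rho>"
  by (simp add: density_def pos_def)

lemma part_tot_p: "le_T_p {} {Ec (1/2)} {Ec 0}"
  unfolding le_T_p_def
proof (intro allI impI)
  fix W P Q assume W: "finite W" and P: "projector W P" and Q: "projector W Q"
    and sat: "sat_tot {} {Ec (1/2)} W P Q"
  show "sat_tot {} {Ec 0} W P Q" unfolding sat_tot_def
  proof (intro allI impI)
    fix X \<rho> assume X: "finite X" and WX: "{} \<union> W \<subseteq> X" and d: "density X \<rho>"
    have WX': "W \<subseteq> X" using WX by simp
    note P' = projector_extop[OF WX' X P] and Q' = projector_extop[OF WX' X Q]
    have H: "\<forall>\<sigma>. density X \<sigma> \<longrightarrow> Re (trace X (mult X (extop X W P) \<sigma>)) \<le>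
        Re (trace X (mult X (extop X W Q) (\<lambda>f g. (1/2) * \<sigma> f g)))"
      using sat X WX unfolding sat_tot_def by (auto simp: extsup_Ec density_op_on)
    have z: "extop X W P = (\<lambda>_ _. 0)" using tot_core[OF X P' Q' H] by (intro ext)
    show "Re (trace X (mult X (extop X W P) \<rho>)) \<le>
        (INF E\<in>{Ec 0}. Re (trace X (mult X (extop X W Q) (extsup X {} E \<rho>))))"
      using d by (simp add: z extsup_Ec density_op_on trace_mult_scale[of X _ 0, simplified])
        (simp add: trace_def mult_def)
  qed
qed

lemma part_par_p: "le_P_p {} {Ec (1/2)} {Ec 1}"
  unfolding le_P_p_def
proof (intro allI impI)
  fix W P Q assume W: "finite W" and P: "projector W P" and Q: "projector W Q"
    and sat: "sat_par {} {Ec (1/2)} W P Q"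
  show "sat_par {} {Ec 1} W P Q" unfolding sat_par_def
  proof (intro allI impI)
    fix X \<rho> assume X: "finite X" and WX: "{} \<union> W \<subseteq> X" and d: "density X \<rho>"
    have WX': "W \<subseteq> X" using WX by simp
    note P' = projector_extop[OF WX' X P] and Q' = projector_extop[OF WX' X Q]
    have H: "\<forall>\<sigma>. density X \<sigma> \<longrightarrow> Re (trace X (mult X (extop X W P) \<sigma>)) \<le>
        Re (trace X (mult X (extop X W Q) (\<lambda>f g. (1/2) * \<sigma> f g)))
          + Re (trace X \<sigma>) - Re (trace X (\<lambda>f g. (1/2) * \<sigma> f g))"
      using sat X WX unfolding sat_par_def by (auto simp: extsup_Ec density_op_on)
    have "Re (trace X (mult X (extop X W P) \<rho>)) \<le> Re (trace X (mult X (extop X W Q) \<rho>))"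
      using par_le[OF X P' Q' H] d by (simp add: density_def)
    then show "Re (trace X (mult X (extop X W P) \<rho>)) \<le>
        (INF E\<in>{Ec 1}. Re (trace X (mult X (extop X W Q) (extsup X {} E \<rho>)))
          + Re (trace X \<rho>) - Re (trace X (extsup X {} E \<rho>)))"
      using d by (simp add: extsup_Ec density_op_on)
  qed
qed

lemma part_tot_e: "\<not> le_T_e {} {Ec (1/2)} {Ec 0}"
proof
  let ?M = "\<lambda>f g. of_real (1/2) * idop {} f g" and ?N = "\<lambda>f g. of_real 1 * idop {} f g"
  assume a: "le_T_e {} {Ec (1/2)} {Ec 0}"
  have eM: "effect {} ?M" and eN: "effect {} ?N" by (rule effect_scaled; simp)+
  have "sat_tot {} {Ec (1/2)} {} ?M ?N" unfolding sat_tot_def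
  proof (intro allI impI)
    fix X \<rho> assume X: "finite X" and d: "density X \<rho>"
    have o: "op_on X (\<lambda>f g. (1/2) * \<rho> f g)" using density_op_on[OF d] by (auto simp: op_on_def)
    show "Re (trace X (mult X (extop X {} ?M) \<rho>)) \<le>
        (INF E\<in>{Ec (1/2)}. Re (trace X (mult X (extop X {} ?N) (extsup X {} E \<rho>))))"
    proof -
      have L: "trace X (mult X (extop X {} ?M) \<rho>) = of_real (1/2) * trace X \<rho>"
        unfolding extop_scaled_id by (rule trace_mult_scaled_id[OF X density_op_on[OF d]])
      have R: "trace X (mult X (extop X {} ?N) (extsup X {} (Ec (1/2)) \<rho>)) = of_real 1 * ((1/2) * trace X \<rho>)"
        unfolding extop_scaled_id extsup_Ec[OF density_op_on[OF d]] trace_mult_scaled_id[OF X o] trace_scale ..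
      show ?thesis unfolding INF_single L R by simp
    qed
  qed
  then have "sat_tot {} {Ec 0} {} ?M ?N" using a eM eN unfolding le_T_e_def by blast
  then have ineq: "Re (trace {} (mult {} (extop {} {} ?M) (idop {}))) \<le>
        (INF E\<in>{Ec 0}. Re (trace {} (mult {} (extop {} {} ?N) (extsup {} {} E (idop {})))))"
    unfolding sat_tot_def using density_id0 by blast
  have eL: "trace {} (mult {} (extop {} {} ?M) (idop {})) = of_real (1/2) * trace {} (idop {})"
    unfolding extop_scaled_id by (rule trace_mult_scaled_id[OF finite.emptyI idop_op_on])
  have eR: "trace {} (mult {} (extop {} {} ?N) (extsup {} {} (Ec 0) (idop {}))) = of_real 1 * (0 * trace {} (idop {}))"
    unfolding extop_scaled_id extsup_Ec[OF idop_op_on]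
      trace_mult_scaled_id[OF finite.emptyI op_on_scale[OF idop_op_on]] trace_scale ..
  from ineq show False unfolding INF_single eL eR trace_id0 by simp
qed

lemma part_par_e: "\<not> le_P_e {} {Ec (1/2)} {Ec 1}"
proof
  let ?M = "\<lambda>f g. of_real (1/2) * idop {} f g" and ?N = "\<lambda>f g. of_real 0 * idop {} f g"
  assume a: "le_P_e {} {Ec (1/2)} {Ec 1}"
  have eM: "effect {} ?M" and eN: "effect {} ?N" by (rule effect_scaled; simp)+
  have "sat_par {} {Ec (1/2)} {} ?M ?N" unfolding sat_par_def
  proof (intro allI impI)
    fix X \<rho> assume X: "finite X" and d: "density X \<rho>"
    have o: "op_on X (\<lambda>f g. (1/2) * \<rho> f g)" using density_op_on[OF d] by (auto simp: op_on_def)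
    show "Re (trace X (mult X (extop X {} ?M) \<rho>)) \<le>
        (INF E\<in>{Ec (1/2)}. Re (trace X (mult X (extop X {} ?N) (extsup X {} E \<rho>)))
           + Re (trace X \<rho>) - Re (trace X (extsup X {} E \<rho>)))"
    proof -
      have L: "trace X (mult X (extop X {} ?M) \<rho>) = of_real (1/2) * trace X \<rho>"
        unfolding extop_scaled_id by (rule trace_mult_scaled_id[OF X density_op_on[OF d]])
      have R: "trace X (mult X (extop X {} ?N) (extsup X {} (Ec (1/2)) \<rho>)) = of_real 0 * ((1/2) * trace X \<rho>)"
        unfolding extop_scaled_id extsup_Ec[OF density_op_on[OF d]] trace_mult_scaled_id[OF X o] trace_scale ..
      have R2: "trace X (extsup X {} (Ec (1/2)) \<rho>) = (1/2) * trace X \<rho>"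
        unfolding extsup_Ec[OF density_op_on[OF d]] trace_scale ..
      show ?thesis unfolding INF_single L R R2 by simp
    qed
  qed
  then have "sat_par {} {Ec 1} {} ?M ?N" using a eM eN unfolding le_P_e_def by blast
  then have ineq: "Re (trace {} (mult {} (extop {} {} ?M) (idop {}))) \<le>
        (INF E\<in>{Ec 1}. Re (trace {} (mult {} (extop {} {} ?N) (extsup {} {} E (idop {}))))
          + Re (trace {} (idop {})) - Re (trace {} (extsup {} {} E (idop {}))))"
    unfolding sat_par_def using density_id0 by blast
  have eL: "trace {} (mult {} (extop {} {} ?M) (idop {})) = of_real (1/2) * trace {} (idop {})"
    unfolding extop_scaled_id by (rule trace_mult_scaled_id[OF finite.emptyI idop_op_on])
  have eR: "trace {} (mult {} (extop {} {} ?N) (extsup {} {} (Ec 1) (idop {}))) = of_real 0 * (1 * trace {} (idop {}))"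
    unfolding extop_scaled_id extsup_Ec[OF idop_op_on]
      trace_mult_scaled_id[OF finite.emptyI op_on_scale[OF idop_op_on]] trace_scale ..
  have eR2: "trace {} (extsup {} {} (Ec 1) (idop {})) = 1 * trace {} (idop {})"
    unfolding extsup_Ec[OF idop_op_on] trace_scale ..
  from ineq show False unfolding INF_single eL eR eR2 trace_id0 by simp
qed

theorem proposition5p9:
  shows "(\<forall>V \<EE> \<FF>. finite V \<longrightarrow> \<EE> \<in> NProg V \<longrightarrow> \<FF> \<in> NProg V \<longrightarrow>
            le_T_e V \<EE> \<FF> \<longrightarrow> le_T_p V \<EE> \<FF>)
       \<and> (\<exists>V \<EE> \<FF>. finite V \<and> \<EE> \<in> NProg V \<and> \<FF> \<in> NProg V \<and>
            le_T_p V \<EE> \<FF> \<and> \<not> le_T_e V \<EE> \<FF>)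
       \<and> (\<forall>V \<EE> \<FF>. finite V \<longrightarrow> \<EE> \<in> NProg V \<longrightarrow> \<FF> \<in> NProg V \<longrightarrow>
            le_P_e V \<EE> \<FF> \<longrightarrow> le_P_p V \<EE> \<FF>)
       \<and> (\<exists>V \<EE> \<FF>. finite V \<and> \<EE> \<in> NProg V \<and> \<FF> \<in> NProg V \<and>
            le_P_p V \<EE> \<FF> \<and> \<not> le_P_e V \<EE> \<FF>)"
proof (intro conjI)
  have N1: "{Ec (1/2)} \<in> NProg {}" using Ec_NProg[of "1/2"] by simp
  have N0: "{Ec 0} \<in> NProg {}" using Ec_NProg[of 0] by simp
  have N2: "{Ec 1} \<in> NProg {}" using Ec_NProg[of 1] by simp
  show "\<forall>V \<EE> \<FF>. finite V \<longrightarrow> \<EE> \<in> NProg V \<longrightarrow> \<FF> \<in> NProg V \<longrightarrow>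
            le_T_e V \<EE> \<FF> \<longrightarrow> le_T_p V \<EE> \<FF>"
    unfolding le_T_e_def le_T_p_def using projector_effect by blast
  show "\<forall>V \<EE> \<FF>. finite V \<longrightarrow> \<EE> \<in> NProg V \<longrightarrow> \<FF> \<in> NProg V \<longrightarrow>
            le_P_e V \<EE> \<FF> \<longrightarrow> le_P_p V \<EE> \<FF>"
    unfolding le_P_e_def le_P_p_def using projector_effect by blast
  show "\<exists>V \<EE> \<FF>. finite V \<and> \<EE> \<in> NProg V \<and> \<FF> \<in> NProg V \<and>
            le_T_p V \<EE> \<FF> \<and> \<not> le_T_e V \<EE> \<FF>"
    using N1 N0 part_tot_p part_tot_e by blast
  show "\<exists>V \<EE> \<FF>. finite V \<and> \<EE> \<in> NProg V \<and> \<FF> \<in> NProg V \<and>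
            le_P_p V \<EE> \<FF> \<and> \<not> le_P_e V \<EE> \<FF>"
    using N1 N2 part_par_p part_par_e by blast
qed

end
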